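(* Let $X$ be a real reflexive Banach space, and let $\mathcal{H}$, $\mathcal{A}$, $\mathcal{H}_{\ast\le}$, $\mathcal{H}_{\ast\ge}$ be as in the context. Then: (i) $\mathcal{A}$ maps $\mathcal{H}$ into $\mathcal{H}_{\ast\le}$, and the map $h\mapsto(\mathcal{A}h)^{\ast}\circ i$ maps $\mathcal{H}$ into $\mathcal{H}_{\ast\ge}$. (ii) The set of fixed points of $\mathcal{A}$ is $\{h\in\mathcal{H}_{\ast\le}: h^{\ast}\circ i=h \text{ on } \mathrm{dom}(h)\}$. (iii) For every $h\in\mathcal{H}$ and every $n\ge1$, $\mathrm{dom}(\mathcal{A}^n h)=\mathrm{dom}(h)\cap\mathrm{dom}(h^{\ast}\circ i)$. (iv) For every $h\in\mathcal{H}$, the sequences $\{\mathcal{A}^n h\}_{n\ge1}\subset\mathcal{H}_{\ast\le}$ and $\{(\mathcal{A}^n h)^{\ast}\circ i\}_{n\ge1}\subset\mathcal{H}_{\ast\ge}$ are pointwise non-increasing and non-decreasing, respectively. Their pointwise limit $\mathcal{A}^{\infty}h:=\lim_{n}\mathcal{A}^n h$ satisfies $\mathrm{dom}(\mathcal{A}^{\infty}h)=\mathrm{dom}(h)\cap\mathrm{dom}(h^{\ast}\circ i)$, and if $\mathcal{A}^{\infty}h$ is lower semicontinuous then it is a fixed point of $\mathcal{A}$. (v) For every $h\in\mathcal{H}$ and every $n\ge1$, $(\mathcal{A}^n h)^{\ast}\circ i\le\mathcal{A}^{\infty}h\le\mathcal{A}^n h$. (vi) For every $h\in\mathcal{H}$,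 the sequence $\{(\mathcal{A}^n h)^{\ast}\circ i\}_{n\ge1}$ converges pointwise to $\mathcal{A}^{\infty}h$ on $\mathrm{dom}(h)\cap\mathrm{dom}(h^{\ast}\circ i)$. (vii) If $T:X\rightrightarrows X^{\ast}$ is maximally monotone, $h\in\mathcal{H}(T)$, and $\mathcal{A}^{\infty}h$ is lower semicontinuous, then $\mathcal{A}^{\infty}h\in\mathcal{H}(T)$.
   Context: $X^{\ast}$ is the dual of $X$ with pairing $\langle\cdot,\cdot\rangle$. The dual of $X\times X^{\ast}$ is identified with $X^{\ast}\times X$ via $\langle (x,x^{\ast}),(y^{\ast},y)\rangle=\langle x,y^{\ast}\rangle+\langle y,x^{\ast}\rangle$; for $g:X\times X^{\ast}\to\mathbb{R}\cup\{+\infty\}$, its conjugate is $g^{\ast}(y^{\ast},y)=\sup_{(x,x^{\ast})}\{\langle x,y^{\ast}\rangle+\langle y,x^{\ast}\rangle-g(x,x^{\ast})\}$. Let $i:X\times X^{\ast}\to X^{\ast}\times X$, $i(x,x^{\ast})=(x^{\ast},x)$, so $g^{\ast}\circ i$ is a function on $X\times X^{\ast}$. For a maximally monotone $T:X\rightrightarrows X^{\ast}$, $\mathcal{H}(T)$ is the family of lower semicontinuous convex functions $h:X\times X^{\ast}\to\mathbb{R}\cup\{+\infty\}$ with $h(x,x^{\ast})\ge\langle x,x^{\ast}\rangle$ everywhere and $h(x,x^{\ast})=\langle x,x^{\ast}\rangle$ whenever $x^{\ast}\in T(x)$. $\mathcal{H}:=\bigcup\{\mathcal{H}(T): T \text{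 maximally monotone}\}$. The map $\mathcal{A}:\mathcal{H}\to\mathcal{H}$ is $\mathcal{A}h:=\tfrac12(h+h^{\ast}\circ i)$ (it is known that $\mathcal{A}h\in\mathcal{H}(T)$ whenever $h\in\mathcal{H}(T)$), and $\mathcal{A}^n$ denotes its $n$-th iterate. $\mathcal{H}_{\ast\le}:=\{h\in\mathcal{H}: h^{\ast}\circ i\le h\}$ and $\mathcal{H}_{\ast\ge}:=\{h\in\mathcal{H}: h^{\ast}\circ i\ge h\}$. $\mathrm{dom}(g)=\{z: g(z)<+\infty\}$. *)

theory Defs
  imports "HOL-Analysis.Analysis"
begin

text \<open>The dual space of X is \<open>'a \<Rightarrow>\<^sub>L real\<close> (bounded linear functionals with the operator norm);
  the pairing is \<open>\<langle>x, x'\<rangle> = blinfun_apply x' x\<close>.  Functions into \<open>\<real> \<union> {+\<infinity>}\<close> are modelled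
  as ereal-valued functions.\<close>

definition canon_emb :: "'a::real_normed_vector \<Rightarrow> (('a \<Rightarrow>\<^sub>L real) \<Rightarrow>\<^sub>L real)" where
  "canon_emb x = Blinfun (\<lambda>f. blinfun_apply f x)"

definition reflexive_space :: "'a::real_normed_vector itself \<Rightarrow> bool" where
  "reflexive_space _ \<longleftrightarrow> surj (canon_emb :: 'a \<Rightarrow> _)"

definition pairing :: "'a::real_normed_vector \<times> ('a \<Rightarrow>\<^sub>L real) \<Rightarrow> real" where
  "pairing z = blinfun_apply (snd z) (fst z)"

text \<open>Conjugate of g on the dual of \<open>X \<times> X*\<close>, identified with \<open>X* \<times> X\<close>.\<close>
definition conj :: "('a::real_normed_vector \<times> ('a \<Rightarrow>\<^sub>L real) \<Rightarrow> ereal)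
    \<Rightarrow> ('a \<Rightarrow>\<^sub>L real) \<times> 'a \<Rightarrow> ereal" where
  "conj g w = (SUP z. ereal (blinfun_apply (fst w) (fst z) + blinfun_apply (snd z) (snd w)) - g z)"

definition iswap :: "'a \<times> 'b \<Rightarrow> 'b \<times> 'a" where
  "iswap z = (snd z, fst z)"

definition conj_i :: "('a::real_normed_vector \<times> ('a \<Rightarrow>\<^sub>L real) \<Rightarrow> ereal)
    \<Rightarrow> 'a \<times> ('a \<Rightarrow>\<^sub>L real) \<Rightarrow> ereal" where
  "conj_i g = conj g \<circ> iswap"

definition edom :: "('b \<Rightarrow> ereal) \<Rightarrow> 'b set" where
  "edom g = {z. g z < \<infinity>}"

definition lsc :: "('b::topological_space \<Rightarrow> ereal) \<Rightarrow> bool" where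
  "lsc g \<longleftrightarrow> (\<forall>c::real. closed {z. g z \<le> ereal c})"

definition econvex :: "('b::real_vector \<Rightarrow> ereal) \<Rightarrow> bool" where
  "econvex g \<longleftrightarrow> convex {(z, r::real). g z \<le> ereal r}"

definition monotone_op :: "('a::real_normed_vector \<times> ('a \<Rightarrow>\<^sub>L real)) set \<Rightarrow> bool" where
  "monotone_op G \<longleftrightarrow> (\<forall>(x, x')\<in>G. \<forall>(y, y')\<in>G. blinfun_apply (x' - y') (x - y) \<ge> 0)"

definition max_monotone :: "('a::real_normed_vector \<times> ('a \<Rightarrow>\<^sub>L real)) set \<Rightarrow> bool" where
  "max_monotone G \<longleftrightarrow> monotone_op G \<and> (\<forall>G'. monotone_op G' \<and> G \<subseteq> G' \<longrightarrow> G' = G)"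

definition HT :: "('a::real_normed_vector \<times> ('a \<Rightarrow>\<^sub>L real)) set
    \<Rightarrow> ('a \<times> ('a \<Rightarrow>\<^sub>L real) \<Rightarrow> ereal) set" where
  "HT G = {h. lsc h \<and> econvex h \<and> (\<forall>z. h z \<ge> ereal (pairing z))
              \<and> (\<forall>z\<in>G. h z = ereal (pairing z))}"

definition Hall :: "('a::real_normed_vector \<times> ('a \<Rightarrow>\<^sub>L real) \<Rightarrow> ereal) set" where
  "Hall = \<Union>{HT G | G. max_monotone G}"

definition Aop :: "('a::real_normed_vector \<times> ('a \<Rightarrow>\<^sub>L real) \<Rightarrow> ereal)
    \<Rightarrow> 'a \<times> ('a \<Rightarrow>\<^sub>L real) \<Rightarrow> ereal" where
  "Aop h = (\<lambda>z. (h z + conj_i h z) / 2)"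

definition H_le :: "('a::real_normed_vector \<times> ('a \<Rightarrow>\<^sub>L real) \<Rightarrow> ereal) set" where
  "H_le = {h\<in>Hall. conj_i h \<le> h}"

definition H_ge :: "('a::real_normed_vector \<times> ('a \<Rightarrow>\<^sub>L real) \<Rightarrow> ereal) set" where
  "H_ge = {h\<in>Hall. conj_i h \<ge> h}"

definition Ainf :: "('a::real_normed_vector \<times> ('a \<Rightarrow>\<^sub>L real) \<Rightarrow> ereal)
    \<Rightarrow> 'a \<times> ('a \<Rightarrow>\<^sub>L real) \<Rightarrow> ereal" where
  "Ainf h = (\<lambda>z. lim (\<lambda>n. (Aop ^^ n) h z))"

end

theory Submission
  imports Defs
begin


definition ph :: "'a::real_normed_vector \<times> ('a \<Rightarrow>\<^sub>L real) \<Rightarrow> 'a \<times> ('a \<Rightarrow>\<^sub>L real) \<Rightarrow> real" where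
  "ph z w = blinfun_apply (snd z) (fst w) + blinfun_apply (snd w) (fst z)"

lemma ph_sym: "ph z w = ph w z" by (simp add: ph_def)

lemma ph_self: "ph z z = 2 * pairing z" by (simp add: ph_def pairing_def)

lemma ph_lin: "ph (u *\<^sub>R z1 + v *\<^sub>R z2) w = u * ph z1 w + v * ph z2 w"
  by (simp add: ph_def blinfun.add_left blinfun.scaleR_left blinfun.add_right blinfun.scaleR_right algebra_simps)

lemma conj_i_eq: "conj_i g z = (SUP w. ereal (ph z w) - g w)"
  by (simp add: conj_i_def conj_def iswap_def ph_def add.commute)

lemma conj_i_ge: "ereal (ph z w) - g w \<le> conj_i g z"
  unfolding conj_i_eq by (rule SUP_upper) simp

lemma conj_i_le: "(\<And>w. ereal (ph z w) - g w \<le> c) \<Longrightarrow> conj_i g z \<le> c"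
  unfolding conj_i_eq by (rule SUP_least)

lemma conj_i_antimono: "(\<And>w. f w \<le> g w) \<Longrightarrow> conj_i g z \<le> conj_i f z"
  by (rule conj_i_le, rule order_trans[OF _ conj_i_ge], rule ereal_minus_mono) auto

lemma ereal_swap_minus: "ereal a - b \<le> c \<Longrightarrow> ereal a - c \<le> (b::ereal)"
  by (cases b; cases c) auto

lemma conj_i_conj_i_le: "conj_i (conj_i f) z \<le> f z"
proof (rule conj_i_le)
  fix w
  have "ereal (ph z w) - f z \<le> conj_i f w" using conj_i_ge[of w z f] by (simp add: ph_sym)
  thus "ereal (ph z w) - conj_i f w \<le> f z" by (rule ereal_swap_minus)
qed

lemma lsc_conj_i: "lsc (conj_i g)"
  unfolding lsc_def
proof
  fix c :: real
  have eq: "{z. conj_i g z \<le> ereal c} = (\<Inter>w. {z. ereal (ph z w) - g w \<le> ereal c})"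
    by (auto simp: conj_i_eq SUP_le_iff)
  have "closed {z. ereal (ph z w) - g w \<le> ereal c}" for w
  proof (cases "g w")
    case (real s)
    have "continuous_on UNIV (\<lambda>z. ph z w)" unfolding ph_def by (intro continuous_intros)
    hence "closed {z. ph z w - s \<le> c}"
      by (intro closed_Collect_le continuous_intros) auto
    thus ?thesis using real by simp
  qed auto
  thus "closed {z. conj_i g z \<le> ereal c}" unfolding eq by auto
qed

lemma econvexI:
  assumes "\<And>z1 z2 r1 r2 u v. g z1 \<le> ereal r1 \<Longrightarrow> g z2 \<le> ereal r2 \<Longrightarrow> 0 \<le> u \<Longrightarrow> 0 \<le> v \<Longrightarrow> u + v = 1
     \<Longrightarrow> g (u *\<^sub>R z1 + v *\<^sub>R z2) \<le> ereal (u * r1 + v * r2)"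
  shows "econvex g"
  unfolding econvex_def convex_def using assms by auto
lemma econvexD:
  assumes "econvex g" "g z1 \<le> ereal r1" "g z2 \<le> ereal r2" "0 \<le> u" "0 \<le> v" "u + v = 1"
  shows "g (u *\<^sub>R z1 + v *\<^sub>R z2) \<le> ereal (u * r1 + v * r2)"
  using assms unfolding econvex_def convex_def by (auto dest!: bspec[of _ _ "(z1,r1)"])

lemma econvex_conj_i: "econvex (conj_i g)"
proof (rule econvexI)
  fix z1 r1 z2 r2 and u v :: real
  assume h1: "conj_i g z1 \<le> ereal r1" and h2: "conj_i g z2 \<le> ereal r2"
    and uv: "0 \<le> u" "0 \<le> v" "u + v = 1"
  show "conj_i g (u *\<^sub>R z1 + v *\<^sub>R z2) \<le> ereal (u * r1 + v * r2)"
  proof (rule conj_i_le)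
    fix w
    have a1: "ereal (ph z1 w) - g w \<le> ereal r1" using h1 conj_i_ge order_trans by blast
    have a2: "ereal (ph z2 w) - g w \<le> ereal r2" using h2 conj_i_ge order_trans by blast
    show "ereal (ph (u *\<^sub>R z1 + v *\<^sub>R z2) w) - g w \<le> ereal (u * r1 + v * r2)"
    proof (cases "g w")
      case (real s)
      have b1: "ph z1 w - s \<le> r1" and b2: "ph z2 w - s \<le> r2" using a1 a2 real by auto
      have "u * (ph z1 w - s) + v * (ph z2 w - s) \<le> u * r1 + v * r2"
        using b1 b2 uv by (intro add_mono mult_left_mono) auto
      moreover have "u * (ph z1 w - s) + v * (ph z2 w - s) = u * ph z1 w + v * ph z2 w - (u + v) * s"
        by (simp add: algebra_simps)
      ultimately have "u * ph z1 w + v * ph z2 w - s \<le> u * r1 + v * r2" using uv by simp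
      thus ?thesis using real by (simp add: ph_lin)
    next
      case MInf thus ?thesis using a1 by simp
    qed simp
  qed
qed




lemma real_small_t:
  fixes A B s :: real
  assumes "\<And>t. 0 < t \<Longrightarrow> t \<le> 1 \<Longrightarrow> (1 - t) * A + t * B \<le> s"
  shows "A \<le> s"
proof (rule ccontr)
  assume "\<not> A \<le> s"
  hence d: "A - s > 0" by simp
  define t where "t = min 1 ((A - s) / (2 * (\<bar>B - A\<bar> + 1)))"
  have t0: "t > 0" using d by (auto simp: t_def intro!: divide_pos_pos) (smt (verit) abs_ge_zero)
  have t1: "t \<le> 1" by (simp add: t_def)
  have "t * \<bar>B - A\<bar> \<le> ((A - s) / (2 * (\<bar>B - A\<bar> + 1))) * \<bar>B - A\<bar>"
    by (rule mult_right_mono) (auto simp: t_def)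
  also have "\<dots> = (A - s) / 2 * (\<bar>B - A\<bar> / (\<bar>B - A\<bar> + 1))"
    by (simp add: field_simps)
  also have "\<dots> \<le> (A - s) / 2 * 1"
    using d by (intro mult_left_mono) auto
  also have "\<dots> = (A - s) / 2" by simp
  finally have "t * \<bar>B - A\<bar> \<le> (A - s) / 2" .
  moreover have "t * (- \<bar>B - A\<bar>) \<le> t * (B - A)"
    using t0 by (intro mult_left_mono) auto
  ultimately have "s < A + t * (B - A)" using d by simp
  moreover have "(1 - t) * A + t * B = A + t * (B - A)" by (simp add: algebra_simps)
  ultimately have "(1 - t) * A + t * B > s" by simp
  thus False using assms[OF t0 t1] by simp
qed

lemma HT_ge: "h \<in> HT G \<Longrightarrow> ereal (pairing z) \<le> h z" by (cases z) (simp add: HT_def)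
lemma HT_eq: "h \<in> HT G \<Longrightarrow> z \<in> G \<Longrightarrow> h z = ereal (pairing z)" by (simp add: HT_def)
lemma HT_cvx: "h \<in> HT G \<Longrightarrow> econvex h" by (simp add: HT_def)
lemma HT_lsc: "h \<in> HT G \<Longrightarrow> lsc h" by (simp add: HT_def)

lemma pairing_comb:
  "pairing ((1 - t) *\<^sub>R z + t *\<^sub>R w) = (1 - t) * (1 - t) * pairing z + t * (1 - t) * ph z w + t * t * pairing w"
  by (simp add: pairing_def ph_def blinfun.add_left blinfun.scaleR_left blinfun.add_right blinfun.scaleR_right) (simp add: algebra_simps)

lemma fitzpatrick:
  assumes h: "h \<in> HT G" and z: "z \<in> G"
  shows "ereal (ph z w - pairing z) \<le> h w"
proof (cases "h w")
  case (real s)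
  let ?p = "pairing z" and ?A = "ph z w" and ?B = "pairing w"
  have "(1 - t) * (?A - ?p) + t * ?B \<le> s" if t: "0 < t" "t \<le> 1" for t
  proof -
    have "h ((1 - t) *\<^sub>R z + t *\<^sub>R w) \<le> ereal ((1 - t) * ?p + t * s)"
      by (rule econvexD[OF HT_cvx[OF h]]) (use t HT_eq[OF h z] real in auto)
    moreover have "ereal (pairing ((1 - t) *\<^sub>R z + t *\<^sub>R w)) \<le> h ((1 - t) *\<^sub>R z + t *\<^sub>R w)"
      by (rule HT_ge[OF h])
    ultimately have "ereal (pairing ((1 - t) *\<^sub>R z + t *\<^sub>R w)) \<le> ereal ((1 - t) * ?p + t * s)" by order
    hence "pairing ((1 - t) *\<^sub>R z + t *\<^sub>R w) \<le> (1 - t) * ?p + t * s" by simp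
    hence "(1 - t) * (1 - t) * ?p + t * (1 - t) * ?A + t * t * ?B \<le> (1 - t) * ?p + t * s"
      by (simp add: pairing_comb)
    hence "t * ((1 - t) * (?A - ?p) + t * ?B) \<le> t * s" by (simp add: algebra_simps)
    thus ?thesis using t by simp
  qed
  hence "?A - ?p \<le> s" by (rule real_small_t)
  thus ?thesis using real by simp
next
  case MInf thus ?thesis using HT_ge[OF h, of w] by simp
qed simp

lemma conj_i_ge_pairing:
  assumes G: "max_monotone G" and h: "h \<in> HT G"
  shows "ereal (pairing z) \<le> conj_i h z"
proof (rule ccontr)
  assume "\<not> ereal (pairing z) \<le> conj_i h z"
  hence lt: "conj_i h z < ereal (pairing z)" by simp
  have key: "0 < blinfun_apply (snd z - snd w) (fst z - fst w)" if w: "w \<in> G" for w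
  proof -
    have "ereal (ph z w) - h w < ereal (pairing z)" using conj_i_ge[of z w h] lt by order
    hence "ph z w - pairing w < pairing z" using HT_eq[OF h w] by simp
    thus ?thesis by (simp add: ph_def pairing_def blinfun.diff_left blinfun.diff_right)
  qed
  have "monotone_op (insert z G)"
    unfolding monotone_op_def
  proof (intro ballI, clarify)
    fix x x' y y' assume a: "(x, x') \<in> insert z G" "(y, y') \<in> insert z G"
    have mG: "monotone_op G" using G by (simp add: max_monotone_def)
    show "0 \<le> blinfun_apply (x' - y') (x - y)"
    proof (cases "(x,x') = z")
      case True
      show ?thesis
      proof (cases "(y,y') = z")
        case True thus ?thesis using \<open>(x,x') = z\<close> by auto
      next
        case False thus ?thesis using key[of "(y,y')"] a True by auto
      qed
    next
      case False
      show ?thesis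
      proof (cases "(y,y') = z")
        case True
        have "0 < blinfun_apply (y' - x') (y - x)" using key[of "(x,x')"] a True False by auto
        moreover have "blinfun_apply (y' - x') (y - x) = blinfun_apply (x' - y') (x - y)"
          by (simp add: blinfun.diff_left blinfun.diff_right)
        ultimately show ?thesis by simp
      next
        case F2: False
        thus ?thesis using mG a False unfolding monotone_op_def by auto
      qed
    qed
  qed
  hence "insert z G = G" using G unfolding max_monotone_def by blast
  hence "z \<in> G" by blast
  thus False using key[of z] by simp
qed

lemma conj_i_on_G:
  assumes h: "h \<in> HT G" and z: "z \<in> G"
  shows "conj_i h z = ereal (pairing z)"
proof (rule antisym)
  show "conj_i h z \<le> ereal (pairing z)"
  proof (rule conj_i_le)
    fix w
    have "ereal (ph z w - pairing z) \<le> h w" by (rule fitzpatrick[OF h z])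
    thus "ereal (ph z w) - h w \<le> ereal (pairing z)" by (cases "h w") auto
  qed
  have "ereal (ph z z) - h z \<le> conj_i h z" by (rule conj_i_ge)
  thus "ereal (pairing z) \<le> conj_i h z" using HT_eq[OF h z] by (simp add: ph_self)
qed

lemma conj_i_HT:
  assumes G: "max_monotone G" and h: "h \<in> HT G"
  shows "conj_i h \<in> HT G"
  unfolding HT_def using lsc_conj_i econvex_conj_i conj_i_ge_pairing[OF G h] conj_i_on_G[OF h]
  by auto




lemma E1: "x \<noteq> -\<infinity> \<Longrightarrow> y \<noteq> -\<infinity> \<Longrightarrow> (x + y) / 2 \<le> ereal r \<Longrightarrow>
   \<exists>a b. x = ereal a \<and> y = ereal b \<and> a + b \<le> 2 * r"
  by (cases x; cases y) auto

lemma E2: "x \<le> ereal a \<Longrightarrow> y \<le> ereal b \<Longrightarrow> a + b \<le> 2 * r \<Longrightarrow> (x + y) / 2 \<le> ereal r"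
  by (cases x; cases y) auto

lemma E3: assumes "x \<noteq> -\<infinity>" "y \<noteq> -\<infinity>" "ereal r < (x + y) / 2"
  shows "\<exists>a b. ereal a < x \<and> ereal b < y \<and> 2 * r \<le> a + b"
proof (cases x)
  case (real p)
  show ?thesis
  proof (cases y)
    case (real q)
    with \<open>x = ereal p\<close> assms(3) show ?thesis
      by (intro exI[of _ "p - (p + q - 2 * r) / 2"] exI[of _ "q - (p + q - 2 * r) / 2"]) auto
  next
    case PInf thus ?thesis using \<open>x = ereal p\<close>
      by (intro exI[of _ "p - 1"] exI[of _ "2 * r - (p - 1)"]) auto
  qed (use assms in auto)
next
  case PInf
  show ?thesis
  proof (cases y)
    case (real q)
    thus ?thesis using PInf
      by (intro exI[of _ "2 * r - (q - 1)"] exI[of _ "q - 1"]) auto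
  next
    case PInf thus ?thesis using \<open>x = \<infinity>\<close> by (intro exI[of _ r] exI[of _ r]) auto
  qed (use assms in auto)
qed (use assms in auto)

lemma E4: "ereal a < x \<Longrightarrow> ereal b < y \<Longrightarrow> 2 * r \<le> a + b \<Longrightarrow> ereal r < (x + y) / 2"
  by (cases x; cases y) auto

lemma E5: "ereal p \<le> x \<Longrightarrow> ereal p \<le> y \<Longrightarrow> ereal p \<le> (x + y) / 2"
  by (cases x; cases y) auto

lemma E7: "ereal e - a \<le> C \<Longrightarrow> ereal e - b \<le> D \<Longrightarrow> a \<noteq> -\<infinity> \<Longrightarrow> b \<noteq> -\<infinity> \<Longrightarrow> C \<noteq> -\<infinity> \<Longrightarrow> D \<noteq> -\<infinity>
   \<Longrightarrow> ereal e - (a + b) / 2 \<le> (C + D) / 2"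
  by (cases a; cases b; cases C; cases D) (auto simp: field_simps)

lemma HT_nm: "h \<in> HT G \<Longrightarrow> h z \<noteq> -\<infinity>"
  using HT_ge[of h G z] by auto

lemma lsc_open: "lsc g \<Longrightarrow> open {z. ereal a < g z}"
proof -
  assume "lsc g"
  hence "closed {z. g z \<le> ereal a}" by (simp add: lsc_def)
  hence "open (- {z. g z \<le> ereal a})" by (simp add: closed_def)
  moreover have "- {z. g z \<le> ereal a} = {z. ereal a < g z}" by auto
  ultimately show ?thesis by simp
qed

lemma lsc_halfsum:
  assumes "lsc f" "lsc g" "\<And>z. f z \<noteq> -\<infinity>" "\<And>z. g z \<noteq> -\<infinity>"
  shows "lsc (\<lambda>z. (f z + g z) / 2)"
  unfolding lsc_def closed_def
proof
  fix r :: real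
  show "open (- {z. (f z + g z) / 2 \<le> ereal r})"
  proof (subst open_subopen, intro ballI)
    fix z assume "z \<in> - {z. (f z + g z) / 2 \<le> ereal r}"
    hence "ereal r < (f z + g z) / 2" by auto
    then obtain a b where ab: "ereal a < f z" "ereal b < g z" "2 * r \<le> a + b"
      using E3 assms(3,4) by blast
    let ?T = "{z. ereal a < f z} \<inter> {z. ereal b < g z}"
    have "open ?T" using lsc_open[OF assms(1)] lsc_open[OF assms(2)] by auto
    moreover have "z \<in> ?T" using ab by auto
    moreover have "?T \<subseteq> - {z. (f z + g z) / 2 \<le> ereal r}"
    proof
      fix y assume "y \<in> ?T"
      hence "ereal r < (f y + g y) / 2" using E4[OF _ _ ab(3)] by auto
      thus "y \<in> - {z. (f z + g z) / 2 \<le> ereal r}" by auto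
    qed
    ultimately show "\<exists>T. open T \<and> z \<in> T \<and> T \<subseteq> - {z. (f z + g z) / 2 \<le> ereal r}" by blast
  qed
qed

lemma econvex_halfsum:
  assumes "econvex f" "econvex g" "\<And>z. f z \<noteq> -\<infinity>" "\<And>z. g z \<noteq> -\<infinity>"
  shows "econvex (\<lambda>z. (f z + g z) / 2)"
proof (rule econvexI)
  fix z1 z2 r1 r2 and u v :: real
  assume h1: "(f z1 + g z1) / 2 \<le> ereal r1" and h2: "(f z2 + g z2) / 2 \<le> ereal r2"
    and uv: "0 \<le> u" "0 \<le> v" "u + v = 1"
  obtain a1 b1 where 1: "f z1 = ereal a1" "g z1 = ereal b1" "a1 + b1 \<le> 2 * r1"
    using E1[OF assms(3,4) h1] by blast
  obtain a2 b2 where 2: "f z2 = ereal a2" "g z2 = ereal b2" "a2 + b2 \<le> 2 * r2"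
    using E1[OF assms(3,4) h2] by blast
  have f: "f (u *\<^sub>R z1 + v *\<^sub>R z2) \<le> ereal (u * a1 + v * a2)"
    by (rule econvexD[OF assms(1)]) (use 1 2 uv in auto)
  have g: "g (u *\<^sub>R z1 + v *\<^sub>R z2) \<le> ereal (u * b1 + v * b2)"
    by (rule econvexD[OF assms(2)]) (use 1 2 uv in auto)
  have "u * (a1 + b1) \<le> u * (2 * r1)" using 1 uv by (intro mult_left_mono) auto
  moreover have "v * (a2 + b2) \<le> v * (2 * r2)" using 2 uv by (intro mult_left_mono) auto
  ultimately have "(u * a1 + v * a2) + (u * b1 + v * b2) \<le> 2 * (u * r1 + v * r2)"
    by (simp add: algebra_simps)
  thus "(f (u *\<^sub>R z1 + v *\<^sub>R z2) + g (u *\<^sub>R z1 + v *\<^sub>R z2)) / 2 \<le> ereal (u * r1 + v * r2)"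
    by (rule E2[OF f g])
qed

lemma Aop_eq: "Aop g z = (g z + conj_i g z) / 2" by (simp add: Aop_def)

lemma Aop_HT:
  assumes G: "max_monotone G" and h: "h \<in> HT G"
  shows "Aop h \<in> HT G"
proof -
  have c: "conj_i h \<in> HT G" by (rule conj_i_HT[OF G h])
  have "lsc (Aop h)" unfolding Aop_def
    by (rule lsc_halfsum[OF HT_lsc[OF h] HT_lsc[OF c] HT_nm[OF h] HT_nm[OF c]])
  moreover have "econvex (Aop h)" unfolding Aop_def
    by (rule econvex_halfsum[OF HT_cvx[OF h] HT_cvx[OF c] HT_nm[OF h] HT_nm[OF c]])
  moreover have "ereal (pairing z) \<le> Aop h z" for z
    unfolding Aop_eq by (rule E5[OF HT_ge[OF h] HT_ge[OF c]])
  moreover have "Aop h z = ereal (pairing z)" if "z \<in> G" for z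
    unfolding Aop_eq using HT_eq[OF h that] HT_eq[OF c that] by simp
  ultimately show ?thesis unfolding HT_def by auto
qed

lemma Aop_le:
  assumes G: "max_monotone G" and h: "h \<in> HT G"
  shows "conj_i (Aop h) z \<le> Aop h z"
proof (rule conj_i_le)
  fix w
  have c: "conj_i h \<in> HT G" by (rule conj_i_HT[OF G h])
  have cc: "conj_i (conj_i h) \<in> HT G" by (rule conj_i_HT[OF G c])
  have 1: "ereal (ph z w) - h w \<le> conj_i h z" by (rule conj_i_ge)
  have 2: "ereal (ph z w) - conj_i h w \<le> h z"
    using conj_i_ge[of z w "conj_i h"] conj_i_conj_i_le[of h z] by order
  show "ereal (ph z w) - Aop h w \<le> Aop h z"
    unfolding Aop_eq using E7[OF 1 2 HT_nm[OF h] HT_nm[OF c] HT_nm[OF c] HT_nm[OF h]]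
    by (simp add: add.commute)
qed




lemma E8: "y \<le> x \<Longrightarrow> (x + y) / 2 \<le> (x::ereal)"
  by (cases x; cases y) auto

lemma E9: "(x::ereal) \<noteq> -\<infinity> \<Longrightarrow> y \<noteq> -\<infinity> \<Longrightarrow> ((x + y) / 2 < \<infinity> \<longleftrightarrow> x < \<infinity> \<and> y < \<infinity>)"
  by (cases x; cases y) auto

lemma E10: "(x::ereal) \<noteq> -\<infinity> \<Longrightarrow> y \<noteq> -\<infinity> \<Longrightarrow> (x + y) / 2 = x \<Longrightarrow> x = \<infinity> \<or> y = x"
  by (cases x; cases y) auto

lemma E11: "(x + x) / 2 = (x::ereal)"
  by (cases x) auto

lemma E12: "y \<noteq> -\<infinity> \<Longrightarrow> (\<infinity> + y) / 2 = (\<infinity>::ereal)"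
  by (cases y) auto

context
  fixes G :: "('a::real_normed_vector \<times> ('a \<Rightarrow>\<^sub>L real)) set" and h
  assumes G: "max_monotone G" and h: "h \<in> HT G"
begin

abbreviation "a n \<equiv> (Aop ^^ n) h"
abbreviation "b n \<equiv> conj_i ((Aop ^^ n) h)"

lemma it_HT: "a n \<in> HT G"
  by (induction n) (auto intro: Aop_HT[OF G] h)

lemma itb_HT: "b n \<in> HT G"
  by (rule conj_i_HT[OF G it_HT])

lemma it_Suc: "a (Suc n) z = (a n z + b n z) / 2"
  by (simp add: Aop_eq)

lemma it_le: "1 \<le> n \<Longrightarrow> b n z \<le> a n z"
proof -
  assume "1 \<le> n"
  then obtain m where "n = Suc m" by (cases n) auto
  thus ?thesis using Aop_le[OF G it_HT[of m]] by simp
qed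

lemma dec: "1 \<le> n \<Longrightarrow> a (Suc n) z \<le> a n z"
  unfolding it_Suc by (rule E8[OF it_le])

lemma inc: "1 \<le> n \<Longrightarrow> b n z \<le> b (Suc n) z"
  by (rule conj_i_antimono[OF dec])

lemma dec_le: assumes "1 \<le> n" "n \<le> m" shows "a m z \<le> a n z"
  using assms(2)
proof (induction m rule: dec_induct)
  case (step k)
  have k1: "1 \<le> k" using assms(1) step(1) by simp
  show ?case using dec[OF k1, of z] step(3) by order
qed simp

lemma inc_le: assumes "1 \<le> n" "n \<le> m" shows "b n z \<le> b m z"
  using assms(2)
proof (induction m rule: dec_induct)
  case (step k)
  have k1: "1 \<le> k" using assms(1) step(1) by simp
  show ?case using inc[OF k1, of z] step(3) by order
qed simp

lemma ba: "1 \<le> n \<Longrightarrow> 1 \<le> m \<Longrightarrow> b n z \<le> a m z"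
proof (cases "n \<le> m")
  case True
  assume "1 \<le> n" "1 \<le> m"
  thus ?thesis using order_trans[OF inc_le[OF \<open>1 \<le> n\<close> True] it_le[OF \<open>1 \<le> m\<close>]] by simp
next
  case False
  assume "1 \<le> n" "1 \<le> m"
  have "m \<le> n" using False by simp
  thus ?thesis using order_trans[OF it_le[OF \<open>1 \<le> n\<close>] dec_le[OF \<open>1 \<le> m\<close> \<open>m \<le> n\<close>]] by simp
qed

lemma lim_a: "(\<lambda>n. a n z) \<longlonglongrightarrow> (INF n. a (Suc n) z)"
proof -
  have "decseq (\<lambda>n. a (Suc n) z)" by (rule decseq_SucI) (rule dec, simp)
  hence "(\<lambda>n. a (Suc n) z) \<longlonglongrightarrow> (INF n. a (Suc n) z)" by (rule LIMSEQ_INF)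
  thus ?thesis by (rule LIMSEQ_imp_Suc)
qed

lemma Ainf_eq: "Ainf h z = (INF n. a (Suc n) z)"
  unfolding Ainf_def using lim_a limI by blast

lemma lim_Ainf: "(\<lambda>n. a n z) \<longlonglongrightarrow> Ainf h z"
  using lim_a Ainf_eq by simp

lemma Ainf_le: "1 \<le> n \<Longrightarrow> Ainf h z \<le> a n z"
proof -
  assume "1 \<le> n"
  then obtain m where "n = Suc m" by (cases n) auto
  thus ?thesis unfolding Ainf_eq by (auto intro: INF_lower)
qed

lemma Ainf_ge: "1 \<le> n \<Longrightarrow> b n z \<le> Ainf h z"
  unfolding Ainf_eq by (rule INF_greatest) (rule ba, auto)

lemma edom_a1: "a 1 z < \<infinity> \<longleftrightarrow> h z < \<infinity> \<and> conj_i h z < \<infinity>"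
  using E9[OF HT_nm[OF h] HT_nm[OF conj_i_HT[OF G h]]] by (simp add: Aop_eq)

lemma edom_an: assumes "1 \<le> n" shows "a n z < \<infinity> \<longleftrightarrow> a 1 z < \<infinity>"
  using assms
proof (induction n rule: dec_induct)
  case (step n)
  have "a (Suc n) z < \<infinity> \<longleftrightarrow> a n z < \<infinity> \<and> b n z < \<infinity>"
    unfolding it_Suc by (rule E9[OF HT_nm[OF it_HT] HT_nm[OF itb_HT]])
  also have "\<dots> \<longleftrightarrow> a n z < \<infinity>" using it_le[OF step(1), of z] by auto
  finally show ?case using step by simp
qed simp

lemma edom_Ainf: "Ainf h z < \<infinity> \<longleftrightarrow> a 1 z < \<infinity>"
proof
  assume "Ainf h z < \<infinity>"
  hence "(INF n. a (Suc n) z) < \<infinity>" unfolding Ainf_eq .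
  then obtain n where "a (Suc n) z < \<infinity>" unfolding INF_less_iff by blast
  thus "a 1 z < \<infinity>" using edom_an[of "Suc n" z] by simp
next
  assume l: "a 1 z < \<infinity>"
  have "Ainf h z \<le> a 1 z" by (rule Ainf_le) simp
  thus "Ainf h z < \<infinity>" using l by order
qed


lemma fin_a: assumes "h z < \<infinity>" "conj_i h z < \<infinity>" shows "a n z < \<infinity>"
proof (cases "n = 0")
  case False
  hence "1 \<le> n" by simp
  thus ?thesis using edom_an[of n z] edom_a1[of z] assms by simp
qed (use assms in simp)

lemma fin_b: assumes "h z < \<infinity>" "conj_i h z < \<infinity>" shows "b n z < \<infinity>"
proof (cases "n = 0")
  case False
  hence "1 \<le> n" by simp
  thus ?thesis using le_less_trans[OF it_le[OF \<open>1 \<le> n\<close>] fin_a[OF assms]] by simp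
qed (use assms in simp)

lemma conv_b: assumes "h z < \<infinity>" "conj_i h z < \<infinity>" shows "(\<lambda>n. b n z) \<longlonglongrightarrow> Ainf h z"
proof -
  define ra where "ra n = real_of_ereal (a n z)" for n
  define rb where "rb n = real_of_ereal (b n z)" for n
  define L where "L = real_of_ereal (Ainf h z)"
  have ea: "a n z = ereal (ra n)" for n
    using fin_a[OF assms, of n] HT_nm[OF it_HT, of n z] unfolding ra_def by (cases "a n z") auto
  have eb: "b n z = ereal (rb n)" for n
    using fin_b[OF assms, of n] HT_nm[OF itb_HT, of n z] unfolding rb_def by (cases "b n z") auto
  have "Ainf h z \<le> a 1 z" by (rule Ainf_le) simp
  moreover have "b 1 z \<le> Ainf h z" by (rule Ainf_ge) simp
  ultimately have eL: "Ainf h z = ereal L"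
    unfolding L_def using ea[of 1] eb[of 1] by (cases "Ainf h z") auto
  have rec: "ra (Suc n) = (ra n + rb n) / 2" for n
  proof -
    have "ereal (ra (Suc n)) = a (Suc n) z" by (rule ea[symmetric])
    also have "\<dots> = (a n z + b n z) / 2" by (rule it_Suc)
    also have "\<dots> = ereal ((ra n + rb n) / 2)" by (simp add: ea eb)
    finally show ?thesis by simp
  qed
  have incr: "1 \<le> n \<Longrightarrow> rb n \<le> rb (Suc n)" for n using inc[of n z] eb[of n] eb[of "Suc n"] by (simp del: funpow.simps)
  have upL: "1 \<le> n \<Longrightarrow> L \<le> ra n" for n using Ainf_le[of n z] ea eL by simp
  have loL: "1 \<le> n \<Longrightarrow> rb n \<le> L" for n using Ainf_ge[of n z] eb eL by simp
  define d where "d n = ra n - rb n" for n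
  have dstep: "1 \<le> n \<Longrightarrow> d (Suc n) \<le> d n / 2" for n
    using incr[of n] rec[of n] unfolding d_def by simp
  have dbound: "d (Suc n) \<le> d 1 * (1/2) ^ n" for n
  proof (induction n)
    case (Suc n)
    have "d (Suc (Suc n)) \<le> d (Suc n) / 2" by (rule dstep) simp
    also have "\<dots> \<le> d 1 * (1/2) ^ n / 2" using Suc by simp
    finally show ?case by simp
  qed simp
  have lo: "L - d 1 * (1/2) ^ n \<le> rb (Suc n)" for n
    using dbound[of n] upL[of "Suc n"] unfolding d_def by simp
  have hi: "rb (Suc n) \<le> L" for n using loL[of "Suc n"] by simp
  have "(\<lambda>n. L - d 1 * (1/2) ^ n) \<longlonglongrightarrow> L - d 1 * 0"
    by (intro tendsto_intros LIMSEQ_realpow_zero) auto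
  hence lim1: "(\<lambda>n. L - d 1 * (1/2) ^ n) \<longlonglongrightarrow> L" by simp
  have ev1: "eventually (\<lambda>n. L - d 1 * (1/2) ^ n \<le> rb (Suc n)) sequentially"
    using lo by simp
  have ev2: "eventually (\<lambda>n. rb (Suc n) \<le> L) sequentially"
    using hi by simp
  have "(\<lambda>n. rb (Suc n)) \<longlonglongrightarrow> L"
    by (rule tendsto_sandwich[OF ev1 ev2 lim1 tendsto_const])
  hence "rb \<longlonglongrightarrow> L" by (rule LIMSEQ_imp_Suc)
  hence "(\<lambda>n. ereal (rb n)) \<longlonglongrightarrow> ereal L" by (rule tendsto_ereal)
  thus ?thesis using eb eL by simp
qed

lemma Ainf_HT: assumes "lsc (Ainf h)" shows "Ainf h \<in> HT G"
proof -
  have cvx: "econvex (Ainf h)"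
  proof (rule econvexI)
    fix z1 z2 r1 r2 and u v :: real
    assume h1: "Ainf h z1 \<le> ereal r1" and h2: "Ainf h z2 \<le> ereal r2"
      and uv: "0 \<le> u" "0 \<le> v" "u + v = 1"
    show "Ainf h (u *\<^sub>R z1 + v *\<^sub>R z2) \<le> ereal (u * r1 + v * r2)"
    proof (rule ereal_le_epsilon2)
      fix e :: real assume e: "0 < e"
      have "ereal r1 < ereal (r1 + e)" using e by simp
      hence "(INF n. a (Suc n) z1) < ereal (r1 + e)" using h1 unfolding Ainf_eq by order
      then obtain n1 where n1: "a (Suc n1) z1 < ereal (r1 + e)" unfolding INF_less_iff by blast
      have "ereal r2 < ereal (r2 + e)" using e by simp
      hence "(INF n. a (Suc n) z2) < ereal (r2 + e)" using h2 unfolding Ainf_eq by order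
      then obtain n2 where n2: "a (Suc n2) z2 < ereal (r2 + e)" unfolding INF_less_iff by blast
      define N where "N = max n1 n2"
      have "a (Suc N) z1 \<le> a (Suc n1) z1" by (rule dec_le) (auto simp: N_def)
      hence 1: "a (Suc N) z1 \<le> ereal (r1 + e)" using n1 by order
      have "a (Suc N) z2 \<le> a (Suc n2) z2" by (rule dec_le) (auto simp: N_def)
      hence 2: "a (Suc N) z2 \<le> ereal (r2 + e)" using n2 by order
      have "a (Suc N) (u *\<^sub>R z1 + v *\<^sub>R z2) \<le> ereal (u * (r1 + e) + v * (r2 + e))"
        by (rule econvexD[OF HT_cvx[OF it_HT] 1 2 uv])
      also have "u * (r1 + e) + v * (r2 + e) = (u * r1 + v * r2) + e"
      proof -
        have "u * (r1 + e) + v * (r2 + e) = (u * r1 + v * r2) + (u + v) * e"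
          by (simp add: algebra_simps)
        thus ?thesis using uv(3) by simp
      qed
      finally have "a (Suc N) (u *\<^sub>R z1 + v *\<^sub>R z2) \<le> ereal (u * r1 + v * r2) + ereal e" by simp
      moreover have "Ainf h (u *\<^sub>R z1 + v *\<^sub>R z2) \<le> a (Suc N) (u *\<^sub>R z1 + v *\<^sub>R z2)"
        by (rule Ainf_le) simp
      ultimately show "Ainf h (u *\<^sub>R z1 + v *\<^sub>R z2) \<le> ereal (u * r1 + v * r2) + ereal e" by order
    qed
  qed
  have ge: "ereal (pairing z) \<le> Ainf h z" for z
    using HT_ge[OF itb_HT[of 1], of z] Ainf_ge[of 1 z] by simp
  have eqG: "Ainf h z = ereal (pairing z)" if "z \<in> G" for z
    unfolding Ainf_eq using HT_eq[OF it_HT that] by (simp del: funpow.simps)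
  show ?thesis unfolding HT_def using assms cvx ge eqG by auto
qed

lemma Ainf_fix: "Aop (Ainf h) = Ainf h"
proof
  fix z
  let ?A = "Ainf h" and ?c = "conj_i (Ainf h)"
  have cle: "?c z \<le> ?A z"
    unfolding Ainf_eq[of z]
  proof (rule INF_greatest)
    fix n
    have "?c z \<le> conj_i (b (Suc n)) z"
      by (rule conj_i_antimono) (rule Ainf_ge, simp)
    also have "\<dots> \<le> a (Suc n) z" by (rule conj_i_conj_i_le)
    finally show "?c z \<le> a (Suc n) z" .
  qed
  have bc: "b n z \<le> ?c z" if "1 \<le> n" for n
    by (rule conj_i_antimono) (rule Ainf_le[OF that])
  have cnm: "?c z \<noteq> -\<infinity>" using bc[of 1] HT_nm[OF itb_HT, of 1 z] by auto
  show "Aop ?A z = ?A z"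
  proof (cases "?A z = \<infinity>")
    case True thus ?thesis using E12[OF cnm] by (simp add: Aop_eq)
  next
    case False
    hence "a 1 z < \<infinity>" using edom_Ainf[of z] by simp
    hence d: "h z < \<infinity>" "conj_i h z < \<infinity>" using edom_a1 by auto
    have "?A z \<le> ?c z"
      by (rule LIMSEQ_le_const2[OF conv_b[OF d]]) (use bc in auto)
    hence cz: "?c z = ?A z" using cle by simp
    show ?thesis by (subst Aop_eq, subst cz, rule E11)
  qed
qed


lemma HallI: "max_monotone G' \<Longrightarrow> g \<in> HT G' \<Longrightarrow> g \<in> Hall"
  unfolding Hall_def by blast

lemma Hle_n: assumes "1 \<le> n" shows "a n \<in> H_le \<and> b n \<in> H_ge"
proof -
  have "a n \<in> Hall" by (rule HallI[OF G it_HT])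
  moreover have "b n \<in> Hall" by (rule HallI[OF G itb_HT])
  moreover have "b n \<le> a n" using it_le[OF assms] by (simp add: le_fun_def)
  moreover have "b n \<le> conj_i (b n)" unfolding le_fun_def
    by (intro allI conj_i_antimono it_le[OF assms])
  ultimately show ?thesis by (simp add: H_le_def H_ge_def)
qed

lemma edom_n: "1 \<le> n \<Longrightarrow> edom (a n) = edom h \<inter> edom (conj_i h)"
  using edom_an edom_a1 by (auto simp: edom_def)

lemma edom_Ainf': "edom (Ainf h) = edom h \<inter> edom (conj_i h)"
  using edom_Ainf edom_a1 by (auto simp: edom_def)

end

lemma HallE: "g \<in> Hall \<Longrightarrow> \<exists>G. max_monotone G \<and> g \<in> HT G"
  unfolding Hall_def by blast

lemma fix_char: "{h\<in>(Hall :: ('a::real_normed_vector \<times> ('a \<Rightarrow>\<^sub>L real) \<Rightarrow> ereal) set). Aop h = h}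
       = {h\<in>H_le. \<forall>z\<in>edom h. conj_i h z = h z}"
proof (intro set_eqI iffI)
  fix h :: "'a \<times> ('a \<Rightarrow>\<^sub>L real) \<Rightarrow> ereal"
  assume "h \<in> {h\<in>Hall. Aop h = h}"
  hence hH: "h \<in> Hall" and fx: "Aop h = h" by auto
  obtain G where G: "max_monotone G" and h: "h \<in> HT G" using HallE[OF hH] by blast
  have *: "h z = \<infinity> \<or> conj_i h z = h z" for z
    using E10[OF HT_nm[OF h] HT_nm[OF conj_i_HT[OF G h]]] fx[THEN fun_cong, of z]
    by (simp add: Aop_eq)
  have "conj_i h \<le> h" unfolding le_fun_def
  proof
    fix z show "conj_i h z \<le> h z" using *[of z] by auto
  qed
  moreover have "\<forall>z\<in>edom h. conj_i h z = h z" using * by (auto simp: edom_def)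
  ultimately show "h \<in> {h\<in>H_le. \<forall>z\<in>edom h. conj_i h z = h z}" using hH by (simp add: H_le_def)
next
  fix h :: "'a \<times> ('a \<Rightarrow>\<^sub>L real) \<Rightarrow> ereal"
  assume "h \<in> {h\<in>H_le. \<forall>z\<in>edom h. conj_i h z = h z}"
  hence hH: "h \<in> Hall" and eq: "\<forall>z\<in>edom h. conj_i h z = h z" by (auto simp: H_le_def)
  obtain G where G: "max_monotone G" and h: "h \<in> HT G" using HallE[OF hH] by blast
  have "Aop h z = h z" for z
  proof (cases "h z = \<infinity>")
    case True thus ?thesis using E12[OF HT_nm[OF conj_i_HT[OF G h]]] by (simp add: Aop_eq)
  next
    case False
    hence "z \<in> edom h" by (simp add: edom_def)
    hence cz: "conj_i h z = h z" using eq by blast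
    show ?thesis by (subst Aop_eq, subst cz, rule E11)
  qed
  thus "h \<in> {h\<in>Hall. Aop h = h}" using hH by auto
qed



theorem theorem2p3:
  fixes X :: "'a::banach itself"
  assumes refl: "reflexive_space X"
  shows
    \<comment> \<open>(i)\<close>
    "(\<forall>h\<in>(Hall :: ('a \<times> ('a \<Rightarrow>\<^sub>L real) \<Rightarrow> ereal) set).
        Aop h \<in> H_le \<and> conj_i (Aop h) \<in> H_ge)
    \<comment> \<open>(ii)\<close>
   \<and> {h\<in>(Hall :: ('a \<times> ('a \<Rightarrow>\<^sub>L real) \<Rightarrow> ereal) set). Aop h = h}
       = {h\<in>H_le. \<forall>z\<in>edom h. conj_i h z = h z}
    \<comment> \<open>(iii)\<close>
   \<and> (\<forall>h\<in>(Hall :: ('a \<times> ('a \<Rightarrow>\<^sub>L real) \<Rightarrow> ereal) set). \<forall>n\<ge>1.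
        edom ((Aop ^^ n) h) = edom h \<inter> edom (conj_i h))
    \<comment> \<open>(iv)\<close>
   \<and> (\<forall>h\<in>(Hall :: ('a \<times> ('a \<Rightarrow>\<^sub>L real) \<Rightarrow> ereal) set).
        (\<forall>n\<ge>1. (Aop ^^ n) h \<in> H_le \<and> conj_i ((Aop ^^ n) h) \<in> H_ge)
      \<and> (\<forall>n\<ge>1. \<forall>z. (Aop ^^ Suc n) h z \<le> (Aop ^^ n) h z
                   \<and> conj_i ((Aop ^^ n) h) z \<le> conj_i ((Aop ^^ Suc n) h) z)
      \<and> (\<forall>z. (\<lambda>n. (Aop ^^ n) h z) \<longlonglongrightarrow> Ainf h z)
      \<and> edom (Ainf h) = edom h \<inter> edom (conj_i h)
      \<and> (lsc (Ainf h) \<longrightarrow> Ainf h \<in> Hall \<and> Aop (Ainf h) = Ainf h))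
    \<comment> \<open>(v)\<close>
   \<and> (\<forall>h\<in>(Hall :: ('a \<times> ('a \<Rightarrow>\<^sub>L real) \<Rightarrow> ereal) set). \<forall>n\<ge>1. \<forall>z.
        conj_i ((Aop ^^ n) h) z \<le> Ainf h z \<and> Ainf h z \<le> (Aop ^^ n) h z)
    \<comment> \<open>(vi)\<close>
   \<and> (\<forall>h\<in>(Hall :: ('a \<times> ('a \<Rightarrow>\<^sub>L real) \<Rightarrow> ereal) set). \<forall>z\<in>edom h \<inter> edom (conj_i h).
        (\<lambda>n. conj_i ((Aop ^^ n) h) z) \<longlonglongrightarrow> Ainf h z)
    \<comment> \<open>(vii)\<close>
   \<and> (\<forall>(G :: ('a \<times> ('a \<Rightarrow>\<^sub>L real)) set) h. max_monotone G \<longrightarrow> h \<in> HT G \<longrightarrow>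
        lsc (Ainf h) \<longrightarrow> Ainf h \<in> HT G)"
  proof -
  have I: "\<forall>h\<in>(Hall :: ('a \<times> ('a \<Rightarrow>\<^sub>L real) \<Rightarrow> ereal) set).
        Aop h \<in> H_le \<and> conj_i (Aop h) \<in> H_ge"
  proof
    fix h :: "'a \<times> ('a \<Rightarrow>\<^sub>L real) \<Rightarrow> ereal" assume "h \<in> Hall"
    then obtain G where G: "max_monotone G" and h: "h \<in> HT G" using HallE by blast
    show "Aop h \<in> H_le \<and> conj_i (Aop h) \<in> H_ge" using Hle_n[OF G h, of 1] by simp
  qed
  have III: "\<forall>h\<in>(Hall :: ('a \<times> ('a \<Rightarrow>\<^sub>L real) \<Rightarrow> ereal) set). \<forall>n\<ge>1.
        edom ((Aop ^^ n) h) = edom h \<inter> edom (conj_i h)"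
  proof (intro ballI allI impI)
    fix h :: "'a \<times> ('a \<Rightarrow>\<^sub>L real) \<Rightarrow> ereal" and n :: nat assume "h \<in> Hall" "1 \<le> n"
    then obtain G where G: "max_monotone G" and h: "h \<in> HT G" using HallE by blast
    show "edom ((Aop ^^ n) h) = edom h \<inter> edom (conj_i h)" by (rule edom_n[OF G h \<open>1 \<le> n\<close>])
  qed
  have IV: "\<forall>h\<in>(Hall :: ('a \<times> ('a \<Rightarrow>\<^sub>L real) \<Rightarrow> ereal) set).
        (\<forall>n\<ge>1. (Aop ^^ n) h \<in> H_le \<and> conj_i ((Aop ^^ n) h) \<in> H_ge)
      \<and> (\<forall>n\<ge>1. \<forall>z. (Aop ^^ Suc n) h z \<le> (Aop ^^ n) h z
                   \<and> conj_i ((Aop ^^ n) h) z \<le> conj_i ((Aop ^^ Suc n) h) z)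
      \<and> (\<forall>z. (\<lambda>n. (Aop ^^ n) h z) \<longlonglongrightarrow> Ainf h z)
      \<and> edom (Ainf h) = edom h \<inter> edom (conj_i h)
      \<and> (lsc (Ainf h) \<longrightarrow> Ainf h \<in> Hall \<and> Aop (Ainf h) = Ainf h)"
  proof
    fix h :: "'a \<times> ('a \<Rightarrow>\<^sub>L real) \<Rightarrow> ereal" assume "h \<in> Hall"
    then obtain G where G: "max_monotone G" and h: "h \<in> HT G" using HallE by blast
    show "(\<forall>n\<ge>1. (Aop ^^ n) h \<in> H_le \<and> conj_i ((Aop ^^ n) h) \<in> H_ge)
      \<and> (\<forall>n\<ge>1. \<forall>z. (Aop ^^ Suc n) h z \<le> (Aop ^^ n) h z
                   \<and> conj_i ((Aop ^^ n) h) z \<le> conj_i ((Aop ^^ Suc n) h) z)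
      \<and> (\<forall>z. (\<lambda>n. (Aop ^^ n) h z) \<longlonglongrightarrow> Ainf h z)
      \<and> edom (Ainf h) = edom h \<inter> edom (conj_i h)
      \<and> (lsc (Ainf h) \<longrightarrow> Ainf h \<in> Hall \<and> Aop (Ainf h) = Ainf h)"
      using Hle_n[OF G h] dec[OF G h] inc[OF G h] lim_Ainf[OF G h] edom_Ainf'[OF G h]
        Ainf_HT[OF G h] G Ainf_fix[OF G h] unfolding Hall_def
      by blast
  qed
  have V: "\<forall>h\<in>(Hall :: ('a \<times> ('a \<Rightarrow>\<^sub>L real) \<Rightarrow> ereal) set). \<forall>n\<ge>1. \<forall>z.
        conj_i ((Aop ^^ n) h) z \<le> Ainf h z \<and> Ainf h z \<le> (Aop ^^ n) h z"
  proof (intro ballI allI impI)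
    fix h :: "'a \<times> ('a \<Rightarrow>\<^sub>L real) \<Rightarrow> ereal" and n :: nat and z assume "h \<in> Hall" "1 \<le> n"
    then obtain G where G: "max_monotone G" and h: "h \<in> HT G" using HallE by blast
    show "conj_i ((Aop ^^ n) h) z \<le> Ainf h z \<and> Ainf h z \<le> (Aop ^^ n) h z"
      using Ainf_ge[OF G h \<open>1 \<le> n\<close>] Ainf_le[OF G h \<open>1 \<le> n\<close>] by simp
  qed
  have VI: "\<forall>h\<in>(Hall :: ('a \<times> ('a \<Rightarrow>\<^sub>L real) \<Rightarrow> ereal) set). \<forall>z\<in>edom h \<inter> edom (conj_i h).
        (\<lambda>n. conj_i ((Aop ^^ n) h) z) \<longlonglongrightarrow> Ainf h z"
  proof (intro ballI)
    fix h :: "'a \<times> ('a \<Rightarrow>\<^sub>L real) \<Rightarrow> ereal" and z assume "h \<in> Hall" "z \<in> edom h \<inter> edom (conj_i h)"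
    then obtain G where G: "max_monotone G" and h: "h \<in> HT G" using HallE by blast
    have "h z < \<infinity>" "conj_i h z < \<infinity>" using \<open>z \<in> edom h \<inter> edom (conj_i h)\<close> by (auto simp: edom_def)
    thus "(\<lambda>n. conj_i ((Aop ^^ n) h) z) \<longlonglongrightarrow> Ainf h z" by (rule conv_b[OF G h])
  qed
  have VII: "\<forall>(G :: ('a \<times> ('a \<Rightarrow>\<^sub>L real)) set) h. max_monotone G \<longrightarrow> h \<in> HT G \<longrightarrow>
        lsc (Ainf h) \<longrightarrow> Ainf h \<in> HT G"
    using Ainf_HT by blast
  show ?thesis using I fix_char III IV V VI VII by blast
qed

end
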